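(* Let $\Phi:[a,b]\to\mathbb{R}$ be continuous and nowhere zero, let $a\le x_0\le b$, and suppose that $f(x),\mathcal Y_0(x_0,x),\mathcal Y_1(x_0,x),\dots,\mathcal Y_n(x_0,x)$ are real-valued functions of class $C^{n+1}$ on $[a,b]$. Then for $x\in[a,b]$ $$f(x)=\sum_{k=0}^n\frac{\mathcal D_kf(x_0)}{k!}\,\mathcal Y_k(x_0,x)+R_n(x),$$ where $\mathcal D_kf=\widetilde D^{(k)}f$ for $k$ odd, $\mathcal D_kf=D^{(k)}f$ for $k$ even, and $$R_n(x)=\frac{1}{n!}\int_{x_0}^x\big[\Phi(\xi)\big]^{(-1)^n}\,\mathcal Y_n(\xi,x)\,\mathcal D_{n+1}f(\xi)\,d\xi.$$
   Context: For $s,x\in[a,b]$ the $\Phi$-power functions are defined recursively by $X^{(0)}(s,x)\equiv 1$, $\widetilde X^{(0)}(s,x)\equiv 1$ and, for $n\ge 1$, $$X^{(n)}(s,x)=n\int_{s}^x X^{(n-1)}(s,\xi)\,\big(\Phi(\xi)\big)^{(-1)^n}\,d\xi,\qquad \widetilde X^{(n)}(s,x)=n\int_{s}^x \widetilde X^{(n-1)}(s,\xi)\,\Big(\frac{1}{\Phi(\xi)}\Big)^{(-1)^n}\,d\xi.$$ For $n\ge0$, $\mathcal Y_n=\widetilde X^{(n)}$ if $n$ is odd and $\mathcal Y_n=X^{(n)}$ if $n$ is even. The $\Phi$-derivatives are $Dh=\Phi\,h'$, $\widetilde Dh=\frac1\Phi h'$, with $D^{(0)}h=\widetilde D^{(0)}h=h$,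 $D^{(k)}h=D(\widetilde D^{(k-1)}h)$, $\widetilde D^{(k)}h=\widetilde D(D^{(k-1)}h)$ for $k\ge1$. In this part of the paper $\Phi$ is assumed real-valued. *)

theory Defs
  imports "HOL-Analysis.Analysis"
begin

definition oint :: "real \<Rightarrow> real \<Rightarrow> (real \<Rightarrow> real) \<Rightarrow> real" where
  "oint s x g = (if s \<le> x then integral {s..x} g else - integral {x..s} g)"

text \<open>Class C^k on a set S (for S = {a..b}: one-sided derivatives at the endpoints).\<close>
definition C_on :: "nat \<Rightarrow> real set \<Rightarrow> (real \<Rightarrow> real) \<Rightarrow> bool" where
  "C_on k S f \<longleftrightarrow> (\<exists>g :: nat \<Rightarrow> real \<Rightarrow> real. g 0 = f \<and>
      (\<forall>j\<le>k. continuous_on S (g j)) \<and>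
      (\<forall>j<k. \<forall>x\<in>S. (g j has_vector_derivative g (Suc j) x) (at x within S)))"

text \<open>Phi-power functions X^(n)(s,x) and tilde-X^(n)(s,x).
  The exponent (-1)^n: Phi^((-1)^n) is Phi for n even and 1/Phi for n odd.\<close>
fun PX :: "(real \<Rightarrow> real) \<Rightarrow> nat \<Rightarrow> real \<Rightarrow> real \<Rightarrow> real" where
  "PX \<Phi> 0 s x = 1"
| "PX \<Phi> (Suc n) s x = real (Suc n) *
     oint s x (\<lambda>\<xi>. PX \<Phi> n s \<xi> * (if even (Suc n) then \<Phi> \<xi> else 1 / \<Phi> \<xi>))"

fun PXt :: "(real \<Rightarrow> real) \<Rightarrow> nat \<Rightarrow> real \<Rightarrow> real \<Rightarrow> real" where
  "PXt \<Phi> 0 s x = 1"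
| "PXt \<Phi> (Suc n) s x = real (Suc n) *
     oint s x (\<lambda>\<xi>. PXt \<Phi> n s \<xi> * (if even (Suc n) then 1 / \<Phi> \<xi> else \<Phi> \<xi>))"

definition PY :: "(real \<Rightarrow> real) \<Rightarrow> nat \<Rightarrow> real \<Rightarrow> real \<Rightarrow> real" where
  "PY \<Phi> n = (if odd n then PXt \<Phi> n else PX \<Phi> n)"

definition phiD :: "(real \<Rightarrow> real) \<Rightarrow> real \<Rightarrow> real \<Rightarrow> (real \<Rightarrow> real) \<Rightarrow> real \<Rightarrow> real" where
  "phiD \<Phi> a b h = (\<lambda>x. \<Phi> x * vector_derivative h (at x within {a..b}))"

definition phiDt :: "(real \<Rightarrow> real) \<Rightarrow> real \<Rightarrow> real \<Rightarrow> (real \<Rightarrow> real) \<Rightarrow> real \<Rightarrow> real" where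
  "phiDt \<Phi> a b h = (\<lambda>x. vector_derivative h (at x within {a..b}) / \<Phi> x)"

fun PD :: "(real \<Rightarrow> real) \<Rightarrow> real \<Rightarrow> real \<Rightarrow> nat \<Rightarrow> (real \<Rightarrow> real) \<Rightarrow> real \<Rightarrow> real"
and PDt :: "(real \<Rightarrow> real) \<Rightarrow> real \<Rightarrow> real \<Rightarrow> nat \<Rightarrow> (real \<Rightarrow> real) \<Rightarrow> real \<Rightarrow> real" where
  "PD \<Phi> a b 0 h = h"
| "PD \<Phi> a b (Suc k) h = phiD \<Phi> a b (PDt \<Phi> a b k h)"
| "PDt \<Phi> a b 0 h = h"
| "PDt \<Phi> a b (Suc k) h = phiDt \<Phi> a b (PD \<Phi> a b k h)"

definition PDk :: "(real \<Rightarrow> real) \<Rightarrow> real \<Rightarrow> real \<Rightarrow> nat \<Rightarrow> (real \<Rightarrow> real) \<Rightarrow> real \<Rightarrow> real" where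
  "PDk \<Phi> a b k = (if odd k then PDt \<Phi> a b k else PD \<Phi> a b k)"

end

theory Submission
  imports Defs
begin

lemma deriv_zero_const:
  fixes F :: "real \<Rightarrow> real"
  assumes "\<And>y. y \<in> {a..b} \<Longrightarrow> (F has_field_derivative 0) (at y within {a..b})"
    and "s \<in> {a..b}" "x \<in> {a..b}"
  shows "F x = F s"
proof -
  obtain c where "\<forall>y\<in>{a..b}. F y = c"
    using has_field_derivative_zero_constant[of "{a..b}" F] assms(1) by auto
  thus ?thesis using assms by auto
qed

lemma oint_eq:
  assumes g: "continuous_on {a..b} g" and s: "s \<in> {a..b}" and x: "x \<in> {a..b}"
  shows "oint s x g = integral {a..x} g - integral {a..s} g"
proof -
  have ig: "g integrable_on {a..b}" using g integrable_continuous_interval by blast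
  show ?thesis
  proof (cases "s \<le> x")
    case True
    have "g integrable_on {a..x}"
      using ig x by (intro integrable_subinterval_real[OF ig]) auto
    hence "integral {a..s} g + integral {s..x} g = integral {a..x} g"
      using True s by (intro Henstock_Kurzweil_Integration.integral_combine) auto
    thus ?thesis using True unfolding oint_def by auto
  next
    case False
    have "g integrable_on {a..s}"
      using ig s by (intro integrable_subinterval_real[OF ig]) auto
    hence "integral {a..x} g + integral {x..s} g = integral {a..s} g"
      using False x by (intro Henstock_Kurzweil_Integration.integral_combine) auto
    thus ?thesis using False unfolding oint_def by auto
  qed
qed

lemma oint_deriv:
  assumes g: "continuous_on {a..b} g" and s: "s \<in> {a..b}" and x: "x \<in> {a..b}"
  shows "((\<lambda>y. oint s y g) has_field_derivative g x) (at x within {a..b})"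
proof -
  have "((\<lambda>u. integral {a..u} g) has_vector_derivative g x) (at x within {a..b})"
    using integral_has_vector_derivative[OF g x] .
  hence "((\<lambda>u. integral {a..u} g) has_field_derivative g x) (at x within {a..b})"
    by (simp add: has_real_derivative_iff_has_vector_derivative)
  hence "((\<lambda>u. integral {a..u} g - integral {a..s} g) has_field_derivative g x) (at x within {a..b})"
    by (auto intro!: derivative_eq_intros)
  thus ?thesis
    by (rule has_field_derivative_transform_within[where d=1]) (use x oint_eq[OF g s] in auto)
qed

lemma oint_cont:
  assumes g: "continuous_on {a..b} g" and s: "s \<in> {a..b}"
  shows "continuous_on {a..b} (\<lambda>y. oint s y g)"
  using oint_deriv[OF g s] DERIV_continuous continuous_on_eq_continuous_within by blast

lemma oint_refl[simp]: "oint s s g = 0"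
  unfolding oint_def by simp

lemma oint_cong:
  assumes "s \<in> {a..b}" "x \<in> {a..b}" "\<And>y. y \<in> {a..b} \<Longrightarrow> F y = G y"
  shows "oint s x F = oint s x G"
proof -
  have "integral {s..x} F = integral {s..x} G" "integral {x..s} F = integral {x..s} G"
    using assms by (auto intro!: integral_cong)
  thus ?thesis unfolding oint_def by simp
qed

lemma oint_cmult: "oint s x (\<lambda>t. c * F t) = c * oint s x F"
  unfolding oint_def by simp

lemma oint_add:
  assumes "continuous_on {a..b} F" "continuous_on {a..b} G" "s \<in> {a..b}" "x \<in> {a..b}"
  shows "oint s x (\<lambda>t. F t + G t) = oint s x F + oint s x G"
  using assms by (simp add: oint_eq[of a b] continuous_on_add integral_add
        integrable_continuous_interval continuous_on_subset)

lemma oint_diff: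
  assumes "continuous_on {a..b} F" "continuous_on {a..b} G" "s \<in> {a..b}" "x \<in> {a..b}"
  shows "oint s x (\<lambda>t. F t - G t) = oint s x F - oint s x G"
  using assms by (simp add: oint_eq[of a b] continuous_on_diff integral_diff
        integrable_continuous_interval continuous_on_subset)

lemma oint_sum:
  assumes "finite I" "\<And>i. i \<in> I \<Longrightarrow> continuous_on {a..b} (F i)" "s \<in> {a..b}" "x \<in> {a..b}"
  shows "oint s x (\<lambda>t. \<Sum>i\<in>I. F i t) = (\<Sum>i\<in>I. oint s x (F i))"
  using assms(1,2)
proof (induction I rule: finite_induct)
  case empty
  then show ?case unfolding oint_def by simp
next
  case (insert i I)
  have "oint s x (\<lambda>t. \<Sum>i\<in>insert i I. F i t) = oint s x (\<lambda>t. F i t + (\<Sum>i\<in>I. F i t))"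
    using insert by simp
  also have "\<dots> = oint s x (F i) + oint s x (\<lambda>t. (\<Sum>i\<in>I. F i t))"
    using insert assms(3,4) by (intro oint_add) (auto intro!: continuous_on_sum)
  finally show ?case using insert by simp
qed

lemma oint_ftc:
  assumes "\<And>y. y \<in> {a..b} \<Longrightarrow> (G has_field_derivative g y) (at y within {a..b})"
    and "continuous_on {a..b} g" "s \<in> {a..b}" "x \<in> {a..b}"
  shows "oint s x g = G x - G s"
proof -
  have "(\<lambda>y. oint s y g - G y) x = (\<lambda>y. oint s y g - G y) s"
  proof (rule deriv_zero_const[of a b "\<lambda>y. oint s y g - G y"])
    fix y assume y: "y \<in> {a..b}"
    have "((\<lambda>y. oint s y g - G y) has_field_derivative g y - g y) (at y within {a..b})"
      by (intro DERIV_diff oint_deriv assms y)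
    thus "((\<lambda>y. oint s y g - G y) has_field_derivative 0) (at y within {a..b})" by simp
  qed (use assms in auto)
  thus ?thesis by simp
qed

lemma oint_split:
  assumes "continuous_on {a..b} g" "s \<in> {a..b}" "c \<in> {a..b}" "x \<in> {a..b}"
  shows "oint s x g = oint s c g + oint c x g"
  using assms by (simp add: oint_eq[of a b])


fun Pw :: "(nat \<Rightarrow> real \<Rightarrow> real) \<Rightarrow> nat \<Rightarrow> real \<Rightarrow> real \<Rightarrow> real" where
  "Pw W 0 s x = 1"
| "Pw W (Suc n) s x = oint s x (\<lambda>t. Pw W n s t * W n t)"

lemma Pw_cong: "(\<And>j. j < n \<Longrightarrow> W j = W' j) \<Longrightarrow> Pw W n s x = Pw W' n s x"
proof (induction n arbitrary: x)
  case (Suc n)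
  thus ?case by simp
qed simp

lemma Pw_refl: "Pw W (Suc n) s s = 0" by simp

lemma Pw_deriv_step:
  assumes W: "\<And>j. continuous_on {a..b} (W j)" and s: "s \<in> {a..b}"
    and c: "continuous_on {a..b} (Pw W n s)" and x: "x \<in> {a..b}"
  shows "(Pw W (Suc n) s has_field_derivative Pw W n s x * W n x) (at x within {a..b})"
proof -
  have cc: "continuous_on {a..b} (\<lambda>t. Pw W n s t * W n t)"
    using c W by (intro continuous_on_mult) auto
  have e: "Pw W (Suc n) s = (\<lambda>y. oint s y (\<lambda>t. Pw W n s t * W n t))" by (rule ext) simp
  show ?thesis unfolding e using oint_deriv[OF cc s x] by simp
qed

lemma Pw_cont_x:
  assumes W: "\<And>j. continuous_on {a..b} (W j)" and s: "s \<in> {a..b}"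
  shows "continuous_on {a..b} (Pw W n s)"
proof (induction n)
  case 0
  then show ?case by simp
next
  case (Suc n)
  have cc: "continuous_on {a..b} (\<lambda>t. Pw W n s t * W n t)"
    using Suc W by (intro continuous_on_mult) auto
  have e: "Pw W (Suc n) s = (\<lambda>y. oint s y (\<lambda>t. Pw W n s t * W n t))" by (rule ext) simp
  show ?case unfolding e by (rule oint_cont[OF cc s])
qed

lemma Pw_chen:
  assumes W: "\<And>j. continuous_on {a..b} (W j)" and s: "s \<in> {a..b}" and c: "c \<in> {a..b}"
  shows "x \<in> {a..b} \<Longrightarrow> Pw W n s x = (\<Sum>k\<le>n. Pw W k s c * Pw (\<lambda>j. W (j + k)) (n - k) c x)"
proof (induction n arbitrary: x)
  case 0
  then show ?case by simp
next
  case (Suc n)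
  define F where "F = (\<lambda>t. Pw W n s t * W n t)"
  have Fc: "continuous_on {a..b} F"
    unfolding F_def using Pw_cont_x[OF W s] W by (intro continuous_on_mult) auto
  have Wk: "\<And>k j. continuous_on {a..b} ((\<lambda>j. W (j + k)) j)" using W by simp
  have "Pw W (Suc n) s x = oint s c F + oint c x F"
    unfolding F_def[symmetric] Pw.simps using oint_split[OF Fc s c Suc.prems] .
  also have "oint c x F = oint c x (\<lambda>t. \<Sum>k\<le>n. Pw W k s c * (Pw (\<lambda>j. W (j + k)) (n - k) c t * W n t))"
    by (rule oint_cong[OF c Suc.prems]) (simp add: F_def Suc.IH sum_distrib_right mult.assoc)
  also have "\<dots> = (\<Sum>k\<le>n. oint c x (\<lambda>t. Pw W k s c * (Pw (\<lambda>j. W (j + k)) (n - k) c t * W n t)))"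
    using c Suc.prems
    by (intro oint_sum) (auto intro!: continuous_on_mult Pw_cont_x[OF Wk c] W)
  also have "\<dots> = (\<Sum>k\<le>n. Pw W k s c * Pw (\<lambda>j. W (j + k)) (Suc n - k) c x)"
  proof (rule sum.cong)
    fix k assume k: "k \<in> {..n}"
    hence e: "Suc n - k = Suc (n - k)" by auto
    show "oint c x (\<lambda>t. Pw W k s c * (Pw (\<lambda>j. W (j + k)) (n - k) c t * W n t))
        = Pw W k s c * Pw (\<lambda>j. W (j + k)) (Suc n - k) c x"
      unfolding oint_cmult e Pw.simps using k by simp
  qed simp
  finally show ?case unfolding F_def by (simp add: add.commute)
qed

lemma Pw_cont_s_base:
  assumes W: "\<And>j. continuous_on {a..b} (W j)" and c: "c \<in> {a..b}"
  shows "continuous_on {a..b} (\<lambda>s. Pw W n s c)"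
proof (induction n rule: less_induct)
  case (less n)
  show ?case
  proof (cases n)
    case 0
    then show ?thesis by simp
  next
    case (Suc m)
    have Wk: "\<And>k j. continuous_on {a..b} ((\<lambda>j. W (j + k)) j)" using W by simp
    have eq: "Pw W n s c = - (\<Sum>k\<le>m. Pw W k s c * Pw (\<lambda>j. W (j + k)) (Suc m - k) c s)"
      if s: "s \<in> {a..b}" for s
    proof -
      have "0 = Pw W (Suc m) s s" by simp
      also have "\<dots> = (\<Sum>k\<le>Suc m. Pw W k s c * Pw (\<lambda>j. W (j + k)) (Suc m - k) c s)"
        by (rule Pw_chen[OF W s c s])
      also have "\<dots> = (\<Sum>k\<le>m. Pw W k s c * Pw (\<lambda>j. W (j + k)) (Suc m - k) c s) + Pw W (Suc m) s c"
        by simp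
      finally show ?thesis unfolding Suc by linarith
    qed
    have "continuous_on {a..b} (\<lambda>s. - (\<Sum>k\<le>m. Pw W k s c * Pw (\<lambda>j. W (j + k)) (Suc m - k) c s))"
      using Suc by (intro continuous_on_minus continuous_on_sum continuous_on_mult less.IH
          Pw_cont_x[OF Wk c]) auto
    thus ?thesis using eq continuous_on_cong by (smt (verit, best))
  qed
qed

lemma Pw_cont_s:
  assumes W: "\<And>j. continuous_on {a..b} (W j)" and ab: "a \<le> b" and x: "x \<in> {a..b}"
  shows "continuous_on {a..b} (\<lambda>s. Pw W n s x)"
proof -
  have a: "a \<in> {a..b}" using ab by simp
  have Wk: "\<And>k j. continuous_on {a..b} ((\<lambda>j. W (j + k)) j)" using W by simp
  have "continuous_on {a..b} (\<lambda>s. \<Sum>k\<le>n. Pw W k s a * Pw (\<lambda>j. W (j + k)) (n - k) a x)"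
    by (intro continuous_on_sum continuous_on_mult Pw_cont_s_base[OF W a] continuous_on_const)
  moreover have "\<And>s. s \<in> {a..b} \<Longrightarrow> Pw W n s x = (\<Sum>k\<le>n. Pw W k s a * Pw (\<lambda>j. W (j + k)) (n - k) a x)"
    using Pw_chen[of a b W, OF W _ a x] by blast
  ultimately show ?thesis using continuous_on_cong by (smt (verit, best))
qed


lemma Pw_swap:
  assumes W: "\<And>j. continuous_on {a..b} (W j)" and ab: "a \<le> b"
    and ph: "continuous_on {a..b} \<phi>" and h: "continuous_on {a..b} h"
    and x0: "x0 \<in> {a..b}" and x: "x \<in> {a..b}"
  shows "oint x0 x (\<lambda>t. \<phi> t * oint x0 t (\<lambda>\<xi>. h \<xi> * Pw W n \<xi> t))
       = oint x0 x (\<lambda>\<xi>. h \<xi> * oint \<xi> x (\<lambda>t. \<phi> t * Pw W n \<xi> t))"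
proof -
  have a: "a \<in> {a..b}" using ab by simp
  have Wk: "\<And>k j. continuous_on {a..b} ((\<lambda>j. W (j + k)) j)" using W by simp
  define A where "A = (\<lambda>k \<xi>. Pw W k \<xi> a)"
  define B where "B = (\<lambda>k t. Pw (\<lambda>j. W (j + k)) (n - k) a t)"
  have Ac: "\<And>k. continuous_on {a..b} (A k)"
    unfolding A_def by (rule Pw_cont_s_base[of a b W, OF W a])
  have Bc: "\<And>k. continuous_on {a..b} (B k)"
    unfolding B_def by (rule Pw_cont_x[OF Wk a])
  have sep: "\<And>\<xi> t. \<xi> \<in> {a..b} \<Longrightarrow> t \<in> {a..b} \<Longrightarrow> Pw W n \<xi> t = (\<Sum>k\<le>n. A k \<xi> * B k t)"
    unfolding A_def B_def using Pw_chen[of a b W, OF W _ a] by blast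
  define H where "H = (\<lambda>k t. oint x0 t (\<lambda>\<xi>. h \<xi> * A k \<xi>))"
  define Q where "Q = (\<lambda>k t. oint x0 t (\<lambda>t. \<phi> t * B k t))"
  have hA: "\<And>k. continuous_on {a..b} (\<lambda>\<xi>. h \<xi> * A k \<xi>)"
    using h Ac by (intro continuous_on_mult) auto
  have pB: "\<And>k. continuous_on {a..b} (\<lambda>t. \<phi> t * B k t)"
    using ph Bc by (intro continuous_on_mult) auto
  have Hc: "\<And>k. continuous_on {a..b} (H k)"
    unfolding H_def by (rule oint_cont[OF hA x0])
  have Qc: "\<And>k. continuous_on {a..b} (Q k)"
    unfolding Q_def by (rule oint_cont[OF pB x0])
  have Hd: "\<And>k y. y \<in> {a..b} \<Longrightarrow> (H k has_field_derivative h y * A k y) (at y within {a..b})"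
    unfolding H_def by (rule oint_deriv[OF hA x0])
  have Qd: "\<And>k y. y \<in> {a..b} \<Longrightarrow> (Q k has_field_derivative \<phi> y * B k y) (at y within {a..b})"
    unfolding Q_def by (rule oint_deriv[OF pB x0])
  have inner1: "oint x0 t (\<lambda>\<xi>. h \<xi> * Pw W n \<xi> t) = (\<Sum>k\<le>n. B k t * H k t)"
    if t: "t \<in> {a..b}" for t
  proof -
    have "oint x0 t (\<lambda>\<xi>. h \<xi> * Pw W n \<xi> t) = oint x0 t (\<lambda>\<xi>. \<Sum>k\<le>n. B k t * (h \<xi> * A k \<xi>))"
      apply (rule oint_cong[OF x0 t]) apply (subst sep) using t by (auto simp: sum_distrib_left algebra_simps)
    also have "\<dots> = (\<Sum>k\<le>n. oint x0 t (\<lambda>\<xi>. B k t * (h \<xi> * A k \<xi>)))"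
      using x0 t h Ac by (intro oint_sum) (auto intro!: continuous_on_mult)
    finally show ?thesis unfolding oint_cmult H_def .
  qed
  have inner2: "oint \<xi> x (\<lambda>t. \<phi> t * Pw W n \<xi> t) = (\<Sum>k\<le>n. A k \<xi> * (Q k x - Q k \<xi>))"
    if xi: "\<xi> \<in> {a..b}" for \<xi>
  proof -
    have "oint \<xi> x (\<lambda>t. \<phi> t * Pw W n \<xi> t) = oint \<xi> x (\<lambda>t. \<Sum>k\<le>n. A k \<xi> * (\<phi> t * B k t))"
      apply (rule oint_cong[OF xi x]) apply (subst sep) using xi by (auto simp: sum_distrib_left algebra_simps)
    also have "\<dots> = (\<Sum>k\<le>n. oint \<xi> x (\<lambda>t. A k \<xi> * (\<phi> t * B k t)))"
      using xi x ph Bc by (intro oint_sum) (auto intro!: continuous_on_mult)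
    also have "\<dots> = (\<Sum>k\<le>n. A k \<xi> * (Q k x - Q k \<xi>))"
      unfolding oint_cmult Q_def using oint_split[OF pB x0 xi x] by simp
    finally show ?thesis .
  qed
  define r where "r = (\<lambda>\<xi>. \<Sum>k\<le>n. h \<xi> * A k \<xi> * Q k \<xi>)"
  have rc: "continuous_on {a..b} r"
    unfolding r_def using h Ac Qc by (intro continuous_on_sum continuous_on_mult) auto
  define l where "l = (\<lambda>t. \<phi> t * (\<Sum>k\<le>n. B k t * H k t))"
  have lc: "continuous_on {a..b} l"
    unfolding l_def using ph Bc Hc by (intro continuous_on_sum continuous_on_mult) auto
  define G where "G = (\<lambda>y. (\<Sum>k\<le>n. Q k y * H k y) - oint x0 y r)"
  have Gd: "(G has_field_derivative l y) (at y within {a..b})" if y: "y \<in> {a..b}" for y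
  proof -
    have "(G has_field_derivative
        (\<Sum>k\<le>n. Q k y * (h y * A k y) + \<phi> y * B k y * H k y) - r y) (at y within {a..b})"
      unfolding G_def
      by (intro DERIV_diff DERIV_sum oint_deriv[OF rc x0 y]) (rule DERIV_mult'[OF Qd[OF y] Hd[OF y]])
    moreover have "(\<Sum>k\<le>n. Q k y * (h y * A k y) + \<phi> y * B k y * H k y) - r y = l y"
      unfolding r_def l_def by (simp add: sum.distrib sum_distrib_left algebra_simps)
    ultimately show ?thesis by simp
  qed
  have "oint x0 x (\<lambda>t. \<phi> t * oint x0 t (\<lambda>\<xi>. h \<xi> * Pw W n \<xi> t)) = oint x0 x l"
    by (rule oint_cong[OF x0 x]) (simp add: inner1 l_def)
  also have "\<dots> = G x - G x0"
    by (rule oint_ftc[OF Gd lc x0 x])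
  also have "G x0 = 0" unfolding G_def Q_def by simp
  also have "G x - 0 = oint x0 x (\<lambda>\<xi>. (\<Sum>k\<le>n. Q k x * (h \<xi> * A k \<xi>)) - r \<xi>)"
  proof -
    have "oint x0 x (\<lambda>\<xi>. (\<Sum>k\<le>n. Q k x * (h \<xi> * A k \<xi>)) - r \<xi>)
        = oint x0 x (\<lambda>\<xi>. (\<Sum>k\<le>n. Q k x * (h \<xi> * A k \<xi>))) - oint x0 x r"
      using x0 x h Ac rc by (intro oint_diff) (auto intro!: continuous_on_sum continuous_on_mult)
    also have "oint x0 x (\<lambda>\<xi>. (\<Sum>k\<le>n. Q k x * (h \<xi> * A k \<xi>))) = (\<Sum>k\<le>n. Q k x * H k x)"
      using x0 x h Ac unfolding H_def
      by (subst oint_sum) (auto intro!: continuous_on_mult simp: oint_cmult)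
    finally show ?thesis unfolding G_def by simp
  qed
  also have "\<dots> = oint x0 x (\<lambda>\<xi>. h \<xi> * oint \<xi> x (\<lambda>t. \<phi> t * Pw W n \<xi> t))"
    by (rule oint_cong[OF x0 x]) (simp add: inner2 r_def sum_distrib_left sum_subtractf[symmetric] algebra_simps)
  finally show ?thesis .
qed


definition V :: "(nat \<Rightarrow> real \<Rightarrow> real) \<Rightarrow> nat \<Rightarrow> nat \<Rightarrow> real \<Rightarrow> real" where
  "V u k = (\<lambda>j. u (k - Suc j))"

lemma V_shift: "Pw (V u (Suc k)) k s x = Pw (V (\<lambda>j. u (Suc j)) k) k s x"
  by (rule Pw_cong) (auto simp: V_def Suc_diff_Suc)

lemma V_Suc: "Pw (V u (Suc k)) (Suc k) s x = oint s x (\<lambda>t. Pw (V (\<lambda>j. u (Suc j)) k) k s t * u 0 t)"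
  by (simp add: V_shift) (simp add: V_def)

lemma V_cont: "(\<And>j. continuous_on S (u j)) \<Longrightarrow> continuous_on S (V u k j)"
  by (simp add: V_def)

lemma taylor_abs:
  assumes ab: "a \<le> b" and x0: "x0 \<in> {a..b}"
  shows "(\<And>j. continuous_on {a..b} (u j)) \<Longrightarrow>
    (\<And>k y. k \<le> n \<Longrightarrow> y \<in> {a..b} \<Longrightarrow> (g k has_field_derivative u k y * g (Suc k) y) (at y within {a..b})) \<Longrightarrow>
    continuous_on {a..b} (g (Suc n)) \<Longrightarrow> x \<in> {a..b} \<Longrightarrow>
    g 0 x = (\<Sum>k\<le>n. g k x0 * Pw (V u k) k x0 x)
          + oint x0 x (\<lambda>\<xi>. u n \<xi> * Pw (V u n) n \<xi> x * g (Suc n) \<xi>)"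
proof (induction n arbitrary: u g x)
  case 0
  have c: "continuous_on {a..b} (\<lambda>y. u 0 y * g (Suc 0) y)"
    using "0.prems" by (intro continuous_on_mult) auto
  have "oint x0 x (\<lambda>y. u 0 y * g (Suc 0) y) = g 0 x - g 0 x0"
    by (rule oint_ftc[OF _ c x0 "0.prems"(4)]) (use "0.prems" in auto)
  then show ?case by simp
next
  case (Suc n)
  define u' where "u' = (\<lambda>j. u (Suc j))"
  define g' where "g' = (\<lambda>k. g (Suc k))"
  have uc: "\<And>j. continuous_on {a..b} (u j)" by (rule Suc.prems(1))
  have u'c: "\<And>j. continuous_on {a..b} (u' j)" unfolding u'_def by (rule Suc.prems(1))
  have x: "x \<in> {a..b}" by (rule Suc.prems(4))
  define K where "K = Pw (V u' n) n"
  define hh where "hh = (\<lambda>\<xi>. u (Suc n) \<xi> * g (Suc (Suc n)) \<xi>)"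
  define P where "P = (\<lambda>k t. Pw (V u' k) k x0 t)"
  define R where "R = (\<lambda>t. oint x0 t (\<lambda>\<xi>. u (Suc n) \<xi> * K \<xi> t * g (Suc (Suc n)) \<xi>))"
  have IH: "g 1 t = (\<Sum>k\<le>n. g (Suc k) x0 * P k t) + R t" if t: "t \<in> {a..b}" for t
  proof -
    have "g' 0 t = (\<Sum>k\<le>n. g' k x0 * Pw (V u' k) k x0 t)
          + oint x0 t (\<lambda>\<xi>. u' n \<xi> * Pw (V u' n) n \<xi> t * g' (Suc n) \<xi>)"
    proof (rule Suc.IH)
      show "\<And>j. continuous_on {a..b} (u' j)" by (rule u'c)
      show "\<And>k y. k \<le> n \<Longrightarrow> y \<in> {a..b} \<Longrightarrow>
          (g' k has_field_derivative u' k y * g' (Suc k) y) (at y within {a..b})"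
        unfolding g'_def u'_def by (rule Suc.prems(2)) auto
      show "continuous_on {a..b} (g' (Suc n))" unfolding g'_def by (rule Suc.prems(3))
      show "t \<in> {a..b}" by (rule t)
    qed
    thus ?thesis unfolding g'_def P_def R_def K_def u'_def by simp
  qed
  have g1c: "continuous_on {a..b} (g 1)"
    unfolding continuous_on_eq_continuous_within
  proof
    fix y assume y: "y \<in> {a..b}"
    have "(g 1 has_field_derivative u 1 y * g (Suc 1) y) (at y within {a..b})"
      by (rule Suc.prems(2)) (use y in auto)
    thus "continuous (at y within {a..b}) (g 1)" by (rule DERIV_continuous)
  qed
  have Pc: "\<And>k. continuous_on {a..b} (P k)"
    unfolding P_def by (rule Pw_cont_x[OF V_cont[OF u'c] x0])
  have Rc: "continuous_on {a..b} R"
  proof -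
    have c: "continuous_on {a..b} (\<lambda>t. g 1 t - (\<Sum>k\<le>n. g (Suc k) x0 * P k t))"
      by (intro continuous_on_diff continuous_on_sum continuous_on_mult continuous_on_const g1c Pc)
    have "continuous_on {a..b} R = continuous_on {a..b} (\<lambda>t. g 1 t - (\<Sum>k\<le>n. g (Suc k) x0 * P k t))"
    proof (rule continuous_on_cong[OF refl])
      fix t assume t: "t \<in> {a..b}"
      show "R t = g 1 t - (\<Sum>k\<le>n. g (Suc k) x0 * P k t)" using IH[OF t] by simp
    qed
    thus ?thesis using c by simp
  qed
  have "g 0 x = g 0 x0 + oint x0 x (\<lambda>t. u 0 t * g 1 t)"
  proof -
    have c: "continuous_on {a..b} (\<lambda>y. u 0 y * g 1 y)"
      by (intro continuous_on_mult uc g1c)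
    have "oint x0 x (\<lambda>y. u 0 y * g 1 y) = g 0 x - g 0 x0"
      by (rule oint_ftc[OF _ c x0 x]) (use Suc.prems in auto)
    thus ?thesis by simp
  qed
  also have "oint x0 x (\<lambda>t. u 0 t * g 1 t)
      = oint x0 x (\<lambda>t. (\<Sum>k\<le>n. g (Suc k) x0 * (u 0 t * P k t)) + u 0 t * R t)"
    apply (rule oint_cong[OF x0 x])
    subgoal premises p for y using IH[OF p] by (simp add: sum_distrib_left algebra_simps)
    done
  also have "\<dots> = oint x0 x (\<lambda>t. (\<Sum>k\<le>n. g (Suc k) x0 * (u 0 t * P k t))) + oint x0 x (\<lambda>t. u 0 t * R t)"
    by (rule oint_add[OF _ _ x0 x]) (intro continuous_on_sum continuous_on_mult continuous_on_const uc Pc Rc)+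
  also have "oint x0 x (\<lambda>t. (\<Sum>k\<le>n. g (Suc k) x0 * (u 0 t * P k t)))
      = (\<Sum>k\<le>n. g (Suc k) x0 * oint x0 x (\<lambda>t. u 0 t * P k t))"
    by (subst oint_sum[OF _ _ x0 x]) (simp_all add: oint_cmult continuous_on_mult continuous_on_const uc Pc)
  also have "(\<Sum>k\<le>n. g (Suc k) x0 * oint x0 x (\<lambda>t. u 0 t * P k t))
      = (\<Sum>k\<le>n. g (Suc k) x0 * Pw (V u (Suc k)) (Suc k) x0 x)"
    unfolding V_Suc P_def u'_def by (simp add: mult.commute)
  also have "oint x0 x (\<lambda>t. u 0 t * R t) = oint x0 x (\<lambda>t. u 0 t * oint x0 t (\<lambda>\<xi>. hh \<xi> * K \<xi> t))"
    unfolding R_def hh_def by (simp add: mult_ac)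
  also have "\<dots> = oint x0 x (\<lambda>\<xi>. hh \<xi> * oint \<xi> x (\<lambda>t. u 0 t * K \<xi> t))"
    unfolding K_def
    by (rule Pw_swap[OF V_cont[OF u'c] ab uc _ x0 x]) (unfold hh_def, intro continuous_on_mult uc Suc.prems(3))
  also have "\<dots> = oint x0 x (\<lambda>\<xi>. u (Suc n) \<xi> * Pw (V u (Suc n)) (Suc n) \<xi> x * g (Suc (Suc n)) \<xi>)"
    unfolding V_Suc hh_def K_def u'_def by (simp add: mult_ac)
  finally show ?case by (subst sum.atMost_Suc_shift) simp
qed


lemma C_on_0: "C_on 0 S h \<longleftrightarrow> continuous_on S h"
proof (rule iffI)
  show "C_on 0 S h \<Longrightarrow> continuous_on S h" unfolding C_on_def by auto
  show "continuous_on S h \<Longrightarrow> C_on 0 S h"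
    unfolding C_on_def by (rule exI[of _ "\<lambda>_. h"]) simp
qed

lemma C_on_SucD:
  assumes "C_on (Suc m) S h"
  shows "continuous_on S h \<and> (\<exists>h'. C_on m S h' \<and> (\<forall>x\<in>S. (h has_field_derivative h' x) (at x within S)))"
proof -
  from assms obtain g where g0: "g 0 = h" and gc: "\<forall>j\<le>Suc m. continuous_on S (g j)"
      and gd: "\<forall>j<Suc m. \<forall>x\<in>S. (g j has_vector_derivative g (Suc j) x) (at x within S)"
    unfolding C_on_def by auto
  have "C_on m S (g 1)" unfolding C_on_def
  proof (rule exI[of _ "\<lambda>j. g (Suc j)"], intro conjI)
    show "g (Suc 0) = g 1" by simp
    show "\<forall>j\<le>m. continuous_on S (g (Suc j))" using gc by simp
    show "\<forall>j<m. \<forall>x\<in>S. (g (Suc j) has_vector_derivative g (Suc (Suc j)) x) (at x within S)"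
      using gd by simp
  qed
  moreover have "\<forall>x\<in>S. (h has_field_derivative g 1 x) (at x within S)"
  proof
    fix x assume "x \<in> S"
    hence "(g 0 has_vector_derivative g 1 x) (at x within S)" using gd by simp
    thus "(h has_field_derivative g 1 x) (at x within S)"
      using g0 by (simp add: has_real_derivative_iff_has_vector_derivative)
  qed
  moreover have "continuous_on S h" using gc g0 by force
  ultimately show ?thesis by blast
qed

lemma C_on_SucI:
  assumes h: "continuous_on S h" and h': "C_on m S h'"
    and d: "\<And>x. x \<in> S \<Longrightarrow> (h has_field_derivative h' x) (at x within S)"
  shows "C_on (Suc m) S h"
proof -
  from h' obtain G where G0: "G 0 = h'" and Gc: "\<forall>j\<le>m. continuous_on S (G j)"
      and Gd: "\<forall>j<m. \<forall>x\<in>S. (G j has_vector_derivative G (Suc j) x) (at x within S)"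
    unfolding C_on_def by auto
  define g where "g = (\<lambda>j. if j = 0 then h else G (j - 1))"
  show ?thesis unfolding C_on_def
  proof (rule exI[of _ g], intro conjI allI impI ballI)
    show "g 0 = h" by (simp add: g_def)
    fix j
    assume j: "j \<le> Suc m"
    show "continuous_on S (g j)"
    proof (cases j)
      case 0 thus ?thesis using h by (simp add: g_def)
    next
      case (Suc i) thus ?thesis using Gc j by (simp add: g_def)
    qed
  next
    fix j x assume j: "j < Suc m" and x: "x \<in> S"
    show "(g j has_vector_derivative g (Suc j) x) (at x within S)"
    proof (cases j)
      case 0 thus ?thesis using d[OF x] G0
        by (simp add: g_def has_real_derivative_iff_has_vector_derivative)
    next
      case (Suc i) thus ?thesis using Gd j x by (simp add: g_def)
    qed
  qed
qed

lemma C_on_Suc: "C_on (Suc m) S h \<longleftrightarrow> continuous_on S h \<and>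
   (\<exists>h'. C_on m S h' \<and> (\<forall>x\<in>S. (h has_field_derivative h' x) (at x within S)))"
  using C_on_SucD C_on_SucI by metis

lemma C_on_mono: "C_on m S h \<Longrightarrow> k \<le> m \<Longrightarrow> C_on k S h"
proof -
  assume "C_on m S h" "k \<le> m"
  then obtain g where g: "g 0 = h" "\<forall>j\<le>m. continuous_on S (g j)"
      "\<forall>j<m. \<forall>x\<in>S. (g j has_vector_derivative g (Suc j) x) (at x within S)"
    unfolding C_on_def by auto
  show "C_on k S h" unfolding C_on_def
  proof (rule exI[of _ g], intro conjI)
    show "g 0 = h" by (rule g(1))
    show "\<forall>j\<le>k. continuous_on S (g j)" using g(2) \<open>k \<le> m\<close> by simp
    show "\<forall>j<k. \<forall>x\<in>S. (g j has_vector_derivative g (Suc j) x) (at x within S)"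
      using g(3) \<open>k \<le> m\<close> by simp
  qed
qed

lemma C_on_cong:
  assumes c: "C_on m S h" and e: "\<And>x. x \<in> S \<Longrightarrow> h x = h2 x"
  shows "C_on m S h2"
proof (cases m)
  case 0
  have "continuous_on S h" using c 0 by (simp add: C_on_0)
  moreover have "continuous_on S h = continuous_on S h2"
    by (rule continuous_on_cong[OF refl]) (rule e)
  ultimately show ?thesis using 0 by (simp add: C_on_0)
next
  case (Suc k)
  obtain h' where hc: "continuous_on S h" and h': "C_on k S h'"
      and hd: "\<forall>x\<in>S. (h has_field_derivative h' x) (at x within S)"
    using c Suc C_on_SucD by blast
  have "continuous_on S h = continuous_on S h2"
    by (rule continuous_on_cong[OF refl]) (rule e)
  hence "continuous_on S h2" using hc by simp
  moreover have "(h2 has_field_derivative h' x) (at x within S)" if x: "x \<in> S" for x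
    by (rule has_field_derivative_transform_within[OF _ zero_less_one x e]) (use hd x in auto)
  ultimately show ?thesis unfolding Suc using C_on_SucI[OF _ h'] by blast
qed

lemma C_on_const: "C_on m S (\<lambda>x. c)"
proof (induction m arbitrary: c)
  case 0
  then show ?case by (simp add: C_on_0)
next
  case (Suc m)
  show ?case
    by (rule C_on_SucI[where h'="\<lambda>x. 0"]) (auto intro: Suc.IH)
qed

lemma C_on_add: "C_on m S h \<Longrightarrow> C_on m S k \<Longrightarrow> C_on m S (\<lambda>x. h x + k x)"
proof (induction m arbitrary: h k)
  case 0
  then show ?case by (auto simp: C_on_0 intro: continuous_on_add)
next
  case (Suc m)
  obtain h' where h: "continuous_on S h" "C_on m S h'" "\<forall>x\<in>S. (h has_field_derivative h' x) (at x within S)"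
    using Suc.prems(1) C_on_SucD by blast
  obtain k' where k: "continuous_on S k" "C_on m S k'" "\<forall>x\<in>S. (k has_field_derivative k' x) (at x within S)"
    using Suc.prems(2) C_on_SucD by blast
  show ?case
  proof (rule C_on_SucI[where h'="\<lambda>x. h' x + k' x"])
    show "continuous_on S (\<lambda>x. h x + k x)" using h k by (intro continuous_on_add) auto
    show "C_on m S (\<lambda>x. h' x + k' x)" using h k by (intro Suc.IH) auto
    fix x assume "x \<in> S"
    thus "((\<lambda>x. h x + k x) has_field_derivative h' x + k' x) (at x within S)"
      using h k by (intro DERIV_add) auto
  qed
qed

lemma C_on_mult: "C_on m S h \<Longrightarrow> C_on m S k \<Longrightarrow> C_on m S (\<lambda>x. h x * k x)"
proof (induction m arbitrary: h k)
  case 0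
  then show ?case by (auto simp: C_on_0 intro: continuous_on_mult)
next
  case (Suc m)
  obtain h' where h: "continuous_on S h" "C_on m S h'" "\<forall>x\<in>S. (h has_field_derivative h' x) (at x within S)"
    using Suc.prems(1) C_on_SucD by blast
  obtain k' where k: "continuous_on S k" "C_on m S k'" "\<forall>x\<in>S. (k has_field_derivative k' x) (at x within S)"
    using Suc.prems(2) C_on_SucD by blast
  have hm: "C_on m S h" "C_on m S k" using Suc.prems C_on_mono le_SucI by blast+
  show ?case
  proof (rule C_on_SucI[where h'="\<lambda>x. h' x * k x + k' x * h x"])
    show "continuous_on S (\<lambda>x. h x * k x)" using h k by (intro continuous_on_mult) auto
    show "C_on m S (\<lambda>x. h' x * k x + k' x * h x)"
      by (intro C_on_add Suc.IH hm h k)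
    fix x assume "x \<in> S"
    thus "((\<lambda>x. h x * k x) has_field_derivative h' x * k x + k' x * h x) (at x within S)"
      using h k by (intro DERIV_mult) auto
  qed
qed

lemma C_on_inverse: "C_on m S h \<Longrightarrow> (\<And>x. x \<in> S \<Longrightarrow> h x \<noteq> 0) \<Longrightarrow> C_on m S (\<lambda>x. 1 / h x)"
proof (induction m)
  case 0
  then show ?case by (auto simp: C_on_0 intro: continuous_on_divide continuous_on_const)
next
  case (Suc m)
  obtain h' where h: "continuous_on S h" "C_on m S h'" "\<forall>x\<in>S. (h has_field_derivative h' x) (at x within S)"
    using Suc.prems(1) C_on_SucD by blast
  have hm: "C_on m S h" using Suc.prems C_on_mono le_SucI by blast
  have i: "C_on m S (\<lambda>x. 1 / h x)" by (rule Suc.IH[OF hm Suc.prems(2)])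
  show ?case
  proof (rule C_on_SucI[where h'="\<lambda>x. (-1) * h' x * ((1 / h x) * (1 / h x))"])
    show "continuous_on S (\<lambda>x. 1 / h x)"
      using h Suc.prems(2) by (intro continuous_on_divide continuous_on_const) auto
    show "C_on m S (\<lambda>x. (-1) * h' x * ((1 / h x) * (1 / h x)))"
      by (intro C_on_mult C_on_const h i)
    fix x assume x: "x \<in> S"
    have "((\<lambda>x. inverse (h x)) has_field_derivative - (inverse (h x) * h' x * inverse (h x))) (at x within S)"
      using h x Suc.prems(2)[OF x] by (intro DERIV_inverse') auto
    thus "((\<lambda>x. 1 / h x) has_field_derivative (-1) * h' x * ((1 / h x) * (1 / h x))) (at x within S)"
      by (simp add: inverse_eq_divide)
  qed
qed


lemma PX_Pw: "PX \<Phi> m s x = fact m * Pw (\<lambda>j x. if even (Suc j) then \<Phi> x else 1 / \<Phi> x) m s x"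
proof (induction m arbitrary: x)
  case 0
  then show ?case by simp
next
  case (Suc m)
  define W where "W = (\<lambda>j x. if even (Suc j) then \<Phi> x else 1 / \<Phi> x)"
  have e: "(\<lambda>\<xi>. PX \<Phi> m s \<xi> * (if even (Suc m) then \<Phi> \<xi> else 1 / \<Phi> \<xi>))
      = (\<lambda>\<xi>. fact m * (Pw W m s \<xi> * W m \<xi>))"
    by (rule ext) (simp add: Suc.IH W_def)
  show ?case unfolding PX.simps e oint_cmult W_def[symmetric] by simp
qed

lemma PXt_Pw: "PXt \<Phi> m s x = fact m * Pw (\<lambda>j x. if even (Suc j) then 1 / \<Phi> x else \<Phi> x) m s x"
proof (induction m arbitrary: x)
  case 0
  then show ?case by simp
next
  case (Suc m)
  define W where "W = (\<lambda>j x. if even (Suc j) then 1 / \<Phi> x else \<Phi> x)"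
  have e: "(\<lambda>\<xi>. PXt \<Phi> m s \<xi> * (if even (Suc m) then 1 / \<Phi> \<xi> else \<Phi> \<xi>))
      = (\<lambda>\<xi>. fact m * (Pw W m s \<xi> * W m \<xi>))"
    by (rule ext) (simp add: Suc.IH W_def)
  show ?case unfolding PXt.simps e oint_cmult W_def[symmetric] by simp
qed

definition u_of :: "(real \<Rightarrow> real) \<Rightarrow> nat \<Rightarrow> real \<Rightarrow> real" where
  "u_of \<Phi> j x = (if even j then \<Phi> x else 1 / \<Phi> x)"

lemma PY_Pw: "PY \<Phi> k s x = fact k * Pw (V (u_of \<Phi>) k) k s x"
proof (cases "odd k")
  case True
  have "Pw (\<lambda>j x. if even (Suc j) then 1 / \<Phi> x else \<Phi> x) k s x = Pw (V (u_of \<Phi>) k) k s x"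
    by (rule Pw_cong) (use True in \<open>auto simp: V_def u_of_def fun_eq_iff\<close>)
  thus ?thesis using True by (simp add: PY_def PXt_Pw)
next
  case False
  have "Pw (\<lambda>j x. if even (Suc j) then \<Phi> x else 1 / \<Phi> x) k s x = Pw (V (u_of \<Phi>) k) k s x"
    by (rule Pw_cong) (use False in \<open>auto simp: V_def u_of_def fun_eq_iff\<close>)
  thus ?thesis using False by (simp add: PY_def PX_Pw)
qed

lemma PY_refl: "PY \<Phi> k s s = (if k = 0 then 1 else 0)"
  by (cases k) (auto simp: PY_def)


lemma PDk_Suc:
  "PDk \<Phi> a b (Suc k) f = (if even k then phiDt \<Phi> a b (PDk \<Phi> a b k f) else phiD \<Phi> a b (PDk \<Phi> a b k f))"
  by (simp add: PDk_def)

theorem theorem5: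
  fixes \<Phi> f :: "real \<Rightarrow> real" and a b x\<^sub>0 :: real and n :: nat
  assumes "continuous_on {a..b} \<Phi>"
    and "\<forall>x\<in>{a..b}. \<Phi> x \<noteq> 0"
    and "a \<le> x\<^sub>0" and "x\<^sub>0 \<le> b"
    and "C_on (Suc n) {a..b} f"
    and "\<forall>k\<le>n. C_on (Suc n) {a..b} (\<lambda>x. PY \<Phi> k x\<^sub>0 x)"
  shows "\<forall>x\<in>{a..b}.
    f x = (\<Sum>k\<le>n. PDk \<Phi> a b k f x\<^sub>0 / fact k * PY \<Phi> k x\<^sub>0 x)
          + 1 / fact n * oint x\<^sub>0 x (\<lambda>\<xi>. (if even n then \<Phi> \<xi> else 1 / \<Phi> \<xi>)
                 * PY \<Phi> n \<xi> x * PDk \<Phi> a b (Suc n) f \<xi>)"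
proof
  fix x assume x: "x \<in> {a..b}"
  have x0: "x\<^sub>0 \<in> {a..b}" using assms(3,4) by simp
  have ab: "a \<le> b" using assms(3,4) by simp
  have nz: "\<And>x. x \<in> {a..b} \<Longrightarrow> \<Phi> x \<noteq> 0" using assms(2) by blast
  show "f x = (\<Sum>k\<le>n. PDk \<Phi> a b k f x\<^sub>0 / fact k * PY \<Phi> k x\<^sub>0 x)
          + 1 / fact n * oint x\<^sub>0 x (\<lambda>\<xi>. (if even n then \<Phi> \<xi> else 1 / \<Phi> \<xi>)
                 * PY \<Phi> n \<xi> x * PDk \<Phi> a b (Suc n) f \<xi>)"
  proof (cases "a = b")
    case True
    hence xx: "x = x\<^sub>0" "x\<^sub>0 = a" using x x0 by auto
    have "(\<Sum>k\<le>n. PDk \<Phi> a b k f x\<^sub>0 / fact k * PY \<Phi> k x\<^sub>0 x)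
        = (\<Sum>k\<le>n. if k = 0 then f x\<^sub>0 else 0)"
      by (rule sum.cong) (auto simp: xx(1) PY_refl PDk_def)
    also have "\<dots> = f x\<^sub>0" by (simp add: sum.delta)
    finally show ?thesis using xx by simp
  next
    case False
    hence ab': "a < b" using ab by simp
    have cb: "cbox a b = {a..b}" by simp
    have vd: "vector_derivative h (at y within {a..b}) = d"
      if "(h has_field_derivative d) (at y within {a..b})" "y \<in> {a..b}" for h d y
      using vector_derivative_within_cbox[of a b y h d] that ab'
      by (simp add: has_real_derivative_iff_has_vector_derivative)
    have Phic: "C_on n {a..b} \<Phi>"
    proof (cases n)
      case 0
      then show ?thesis using assms(1) by (simp add: C_on_0)
    next
      case (Suc m)
      have "C_on (Suc n) {a..b} (\<lambda>x. PY \<Phi> 1 x\<^sub>0 x)" using assms(6) Suc by auto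
      moreover have "(\<lambda>x. PY \<Phi> 1 x\<^sub>0 x) = (\<lambda>x. oint x\<^sub>0 x \<Phi>)"
        by (rule ext) (simp add: PY_def)
      ultimately have "C_on (Suc n) {a..b} (\<lambda>x. oint x\<^sub>0 x \<Phi>)" by simp
      then obtain h' where h': "C_on n {a..b} h'"
        and hd: "\<forall>y\<in>{a..b}. ((\<lambda>x. oint x\<^sub>0 x \<Phi>) has_field_derivative h' y) (at y within {a..b})"
        using C_on_SucD by blast
      have "h' y = \<Phi> y" if y: "y \<in> {a..b}" for y
      proof -
        have "vector_derivative (\<lambda>x. oint x\<^sub>0 x \<Phi>) (at y within {a..b}) = h' y"
          using vd hd y by blast
        moreover have "vector_derivative (\<lambda>x. oint x\<^sub>0 x \<Phi>) (at y within {a..b}) = \<Phi> y"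
          using vd oint_deriv[OF assms(1) x0 y] y by blast
        ultimately show ?thesis by simp
      qed
      thus ?thesis using C_on_cong[OF h'] by blast
    qed
    have Phii: "C_on n {a..b} (\<lambda>x. 1 / \<Phi> x)" by (rule C_on_inverse[OF Phic nz])
    define u where "u = u_of \<Phi>"
    define g where "g = (\<lambda>k. PDk \<Phi> a b k f)"
    have uC: "C_on n {a..b} (u j)" for j
    proof (cases "even j")
      case True
      have "u j = \<Phi>" unfolding u_def u_of_def using True by (simp add: fun_eq_iff)
      thus ?thesis using Phic by simp
    next
      case False
      have "u j = (\<lambda>x. 1 / \<Phi> x)" unfolding u_def u_of_def using False by (simp add: fun_eq_iff)
      thus ?thesis using Phii by simp
    qed
    have uc: "continuous_on {a..b} (u j)" for j
      using C_on_mono[OF uC[of j], of 0] by (simp add: C_on_0)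
    have step: "C_on (n - k) {a..b} (g (Suc k)) \<and>
        (\<forall>y\<in>{a..b}. (g k has_field_derivative u k y * g (Suc k) y) (at y within {a..b}))"
      if k: "k \<le> n" and gk: "C_on (Suc n - k) {a..b} (g k)" for k
    proof -
      have "Suc n - k = Suc (n - k)" using k by simp
      then obtain h' where h': "C_on (n - k) {a..b} h'"
        and hd: "\<forall>y\<in>{a..b}. (g k has_field_derivative h' y) (at y within {a..b})"
        using C_on_SucD gk by metis
      have gS: "g (Suc k) y = (if even k then h' y * (1 / \<Phi> y) else \<Phi> y * h' y)"
        if y: "y \<in> {a..b}" for y
      proof -
        have "vector_derivative (g k) (at y within {a..b}) = h' y" using vd hd y by blast
        thus ?thesis unfolding g_def PDk_Suc phiD_def phiDt_def by simp
      qed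
      have c1: "C_on (n - k) {a..b} (\<lambda>y. if even k then h' y * (1 / \<Phi> y) else \<Phi> y * h' y)"
      proof (cases "even k")
        case True
        have "C_on (n - k) {a..b} (\<lambda>y. h' y * (1 / \<Phi> y))"
          by (intro C_on_mult h' C_on_mono[OF Phii]) simp
        thus ?thesis using True by simp
      next
        case False
        have "C_on (n - k) {a..b} (\<lambda>y. \<Phi> y * h' y)"
          by (intro C_on_mult h' C_on_mono[OF Phic]) simp
        thus ?thesis using False by simp
      qed
      have "C_on (n - k) {a..b} (g (Suc k))"
        by (rule C_on_cong[OF c1]) (simp add: gS)
      moreover have "(g k has_field_derivative u k y * g (Suc k) y) (at y within {a..b})"
        if y: "y \<in> {a..b}" for y
      proof -
        have "u k y * g (Suc k) y = h' y"
          using nz[OF y] by (simp add: gS[OF y] u_def u_of_def)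
        thus ?thesis using hd y by simp
      qed
      ultimately show ?thesis by blast
    qed
    have gC: "k \<le> Suc n \<Longrightarrow> C_on (Suc n - k) {a..b} (g k)" for k
    proof (induction k)
      case 0
      then show ?case using assms(5) by (simp add: g_def PDk_def)
    next
      case (Suc k)
      hence "C_on (n - k) {a..b} (g (Suc k))" using step[of k] by simp
      thus ?case by simp
    qed
    have gd: "\<And>k y. k \<le> n \<Longrightarrow> y \<in> {a..b} \<Longrightarrow> (g k has_field_derivative u k y * g (Suc k) y) (at y within {a..b})"
      using step gC by simp
    have gc: "continuous_on {a..b} (g (Suc n))"
      using gC[of "Suc n"] by (simp add: C_on_0)
    have T: "g 0 x = (\<Sum>k\<le>n. g k x\<^sub>0 * Pw (V u k) k x\<^sub>0 x)
          + oint x\<^sub>0 x (\<lambda>\<xi>. u n \<xi> * Pw (V u n) n \<xi> x * g (Suc n) \<xi>)"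
      by (rule taylor_abs[OF ab x0 uc gd gc x])
    have g0: "g 0 = f" by (simp add: g_def PDk_def)
    have S: "(\<Sum>k\<le>n. PDk \<Phi> a b k f x\<^sub>0 / fact k * PY \<Phi> k x\<^sub>0 x)
        = (\<Sum>k\<le>n. g k x\<^sub>0 * Pw (V u k) k x\<^sub>0 x)"
      by (rule sum.cong) (simp_all add: PY_Pw g_def u_def)
    have R: "1 / fact n * oint x\<^sub>0 x (\<lambda>\<xi>. (if even n then \<Phi> \<xi> else 1 / \<Phi> \<xi>)
                 * PY \<Phi> n \<xi> x * PDk \<Phi> a b (Suc n) f \<xi>)
        = oint x\<^sub>0 x (\<lambda>\<xi>. u n \<xi> * Pw (V u n) n \<xi> x * g (Suc n) \<xi>)"
    proof -
      have "(\<lambda>\<xi>. (if even n then \<Phi> \<xi> else 1 / \<Phi> \<xi>) * PY \<Phi> n \<xi> x * PDk \<Phi> a b (Suc n) f \<xi>)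
          = (\<lambda>\<xi>. fact n * (u n \<xi> * Pw (V u n) n \<xi> x * g (Suc n) \<xi>))"
        by (rule ext) (simp add: PY_Pw g_def u_def u_of_def)
      thus ?thesis by (simp add: oint_cmult)
    qed
    show ?thesis using T unfolding g0 S R .
  qed
qed

end
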